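(* Let $N\ge1$, $h,\varepsilon\in(0,1)$, let $\Phi$ be the opinion operator defined in the context, let $V^0=(v^0_1,\dots,v^0_N)\in[-1,1]^N$ with $v^0_1\le\dots\le v^0_N$, and let $V^n=\Phi^n(V^0)=(v^n_1,\dots,v^n_N)$. If $v^0_k\ge\varepsilon$ for some $k$, then there exists $n_0\ge0$ such that $v^n_k=1$ for all $n\ge n_0$.
   Context: For $V=(v_1,\dots,v_N)\in[-1,1]^N$ and each $k$, let $J(v_k)=\{l\in\{1,\dots,N\}:|v_l-v_k|\le\varepsilon\}$ and $I(v_k)=|J(v_k)|$. Put $w_k(V)=v_k+\frac{h}{I(v_k)}\sum_{l\in J(v_k)}v_l$. Then $\Phi(V)=(v_1',\dots,v_N')$ where $v_k'=-1$ if $w_k<-1$, $v_k'=1$ if $w_k>1$, and $v_k'=w_k$ if $|w_k|\le1$. *)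

theory Defs
  imports Main "HOL.Real"
begin

text \<open>Opinion vectors V = (v_1,...,v_N) are represented as functions nat => real,
  meaningful on the index set {1..N}; the operator sets entries outside {1..N} to 0.\<close>

definition opJ :: "nat \<Rightarrow> real \<Rightarrow> (nat \<Rightarrow> real) \<Rightarrow> nat \<Rightarrow> nat set" where
  "opJ N eps V k = {l \<in> {1..N}. \<bar>V l - V k\<bar> \<le> eps}"

definition opI :: "nat \<Rightarrow> real \<Rightarrow> (nat \<Rightarrow> real) \<Rightarrow> nat \<Rightarrow> nat" where
  "opI N eps V k = card (opJ N eps V k)"

definition opw :: "nat \<Rightarrow> real \<Rightarrow> real \<Rightarrow> (nat \<Rightarrow> real) \<Rightarrow> nat \<Rightarrow> real" where
  "opw N h eps V k = V k + h / real (opI N eps V k) * (\<Sum>l\<in>opJ N eps V k. V l)"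

definition Phi :: "nat \<Rightarrow> real \<Rightarrow> real \<Rightarrow> (nat \<Rightarrow> real) \<Rightarrow> (nat \<Rightarrow> real)" where
  "Phi N h eps V = (\<lambda>k. if k \<in> {1..N} then
      (let w = opw N h eps V k in if w < -1 then -1 else if w > 1 then 1 else w)
    else 0)"

end

theory Submission
  imports Defs
begin

lemma step_le1:
  assumes "k \<in> {1..N}"
  shows "Phi N h eps V k \<le> 1"
  using assms by (auto simp: Phi_def Let_def)

lemma step_ge:
  assumes k: "k \<in> {1..N}" and vk: "V k \<ge> eps" and e: "eps > 0" and hp: "h > 0"
  shows "Phi N h eps V k \<ge> min 1 (V k + h * eps / real N)"
proof -
  let ?J = "opJ N eps V k"
  have fin: "finite ?J" unfolding opJ_def by auto
  have kJ: "k \<in> ?J" using k e unfolding opJ_def by auto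
  have sub: "?J \<subseteq> {1..N}" unfolding opJ_def by auto
  have cardle: "card ?J \<le> N" using card_mono[OF _ sub] by simp
  have cardpos: "card ?J > 0" using fin kJ card_gt_0_iff by blast
  have nonneg: "\<forall>l\<in>?J - {k}. V l \<ge> 0" unfolding opJ_def using vk by auto
  have "(\<Sum>l\<in>?J. V l) = V k + (\<Sum>l\<in>?J - {k}. V l)"
    using fin kJ by (simp add: sum.remove)
  moreover have "(\<Sum>l\<in>?J - {k}. V l) \<ge> 0" using nonneg by (meson sum_nonneg)
  ultimately have S: "(\<Sum>l\<in>?J. V l) \<ge> eps" using vk by linarith
  have Npos: "real N > 0" using k by auto
  have "h / real (card ?J) * (\<Sum>l\<in>?J. V l) \<ge> h / real N * eps"
  proof (rule mult_mono)
    show "h / real N \<le> h / real (card ?J)"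
      using cardle cardpos hp by (simp add: frac_le)
  qed (use S hp e in auto)
  hence w: "opw N h eps V k \<ge> V k + h * eps / real N"
    unfolding opw_def opI_def by simp
  have "V k + h * eps / real N > 0" using vk e hp Npos by (smt (verit) divide_pos_pos mult_pos_pos)
  thus ?thesis using w k by (auto simp: Phi_def Let_def)
qed

theorem lemma3:
  fixes N :: nat and h eps :: real and V0 :: "nat \<Rightarrow> real" and k :: nat
  assumes "N \<ge> 1"
    and "0 < h" "h < 1" and "0 < eps" "eps < 1"
    and "\<forall>i\<in>{1..N}. -1 \<le> V0 i \<and> V0 i \<le> 1"
    and "\<forall>i j. 1 \<le> i \<and> i \<le> j \<and> j \<le> N \<longrightarrow> V0 i \<le> V0 j"
    and "k \<in> {1..N}" and "V0 k \<ge> eps"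
  shows "\<exists>n0. \<forall>n\<ge>n0. ((Phi N h eps ^^ n) V0) k = 1"
proof -
  define c where "c = h * eps / real N"
  have cpos: "c > 0" unfolding c_def using assms by auto
  have main: "((Phi N h eps ^^ n) V0) k \<ge> min 1 (V0 k + real n * c)" for n
  proof (induction n)
    case 0 then show ?case by simp
  next
    case (Suc n)
    let ?V = "(Phi N h eps ^^ n) V0"
    have ge: "?V k \<ge> eps" using Suc assms(9) cpos
      by (smt (verit) assms(5) mult_nonneg_nonneg of_nat_0_le_iff)
    have "Phi N h eps ?V k \<ge> min 1 (?V k + c)"
      using step_ge[of k N eps ?V h, OF assms(8) ge assms(4) assms(2)] unfolding c_def .
    thus ?case using Suc cpos by (simp add: algebra_simps min_def split: if_splits)
  qed
  obtain m :: nat where m: "real m * c \<ge> 1"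
    using reals_Archimedean3[OF cpos] by (meson less_le)
  show ?thesis
  proof (intro exI[of _ "Suc m"] allI impI)
    fix n assume n: "Suc m \<le> n"
    then obtain p where p: "n = Suc p" by (cases n) auto
    have "real n * c \<ge> real m * c" using n cpos by simp
    hence "((Phi N h eps ^^ n) V0) k \<ge> 1" using main[of n] m assms(9) assms(4) by linarith
    moreover have "((Phi N h eps ^^ n) V0) k \<le> 1" using p step_le1[OF assms(8)] by simp
    ultimately show "((Phi N h eps ^^ n) V0) k = 1" by linarith
  qed
qed

end
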